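(* Let $q$ be a prime power, $m,u,v$ positive integers, and let $\mathbf y=(y_0,\dots,y_{v-1})\in\mathrm{GF}(q^m)^v$ have rank $w$. Then for every integer $s\ge w$, the number of vectors $\mathbf z=(z_0,\dots,z_{u-1})\in\mathrm{GF}(q^m)^u$ such that $\mathbf x=(\mathbf y,\mathbf z)\in\mathrm{GF}(q^m)^{u+v}$ has rank $s$ is exactly $${u\brack s-w}A(m-w,s-w)\,q^{wu}.$$
   Context: For a vector over $\mathrm{GF}(q^m)$, its rank is the dimension over $\mathrm{GF}(q)$ of the $\mathrm{GF}(q)$-span of its coordinates. $A(a,0)=1$ and $A(a,j)=\prod_{i=0}^{j-1}(q^a-q^i)$ for $j\ge1$; the Gaussian binomial is ${u\brack j}=A(u,j)/A(j,j)$ (which is $0$ when $j>u$). *)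

theory Defs
  imports "HOL-Algebra.Embedded_Algebras" "HOL-Computational_Algebra.Primes"
begin

definition rank_over :: "'a ring \<Rightarrow> 'a set \<Rightarrow> 'a list \<Rightarrow> nat" where
  "rank_over R K xs = ring.dim R K (ring.Span R K xs)"

definition A_fun :: "nat \<Rightarrow> nat \<Rightarrow> nat \<Rightarrow> real" where
  "A_fun q a j = (\<Prod>i<j. (real q ^ a - real q ^ i))"

definition gauss_binom :: "nat \<Rightarrow> nat \<Rightarrow> nat \<Rightarrow> real" where
  "gauss_binom q u j = A_fun q u j / A_fun q j j"

end

theory Submission
  imports Defs
begin

context ring begin

lemma card_Span:
  assumes K: "subfield K R" and fK: "finite K" and U: "set Us \<subseteq> carrier R"
  shows "card (Span K Us) = card K ^ dim K (Span K Us)"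
proof -
  obtain n where dn: "dimension n K (Span K Us)"
    using Span_finite_dimension[OF K U] by (auto simp: finite_dimension_def)
  have dim: "dim K (Span K Us) = n" using dimI[OF K dn] by (simp add: over_def)
  obtain Vs where V: "set Vs \<subseteq> carrier R" "independent K Vs" "length Vs = n" "Span K Vs = Span K Us"
    using exists_base[OF K dn] by blast
  let ?L = "{Ks. set Ks \<subseteq> K \<and> length Ks = n}"
  have img: "(\<lambda>Ks. combine Ks Vs) ` ?L = Span K Vs"
    using Span_eq_combine_set_length_version[OF K V(1)] V(3) by auto
  have inj: "inj_on (\<lambda>Ks. combine Ks Vs) ?L"
  proof (rule inj_onI)
    fix a b assume a: "a \<in> ?L" and b: "b \<in> ?L" and e: "combine a Vs = combine b Vs"
    have "combine a Vs \<in> Span K Vs" using img a by blast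
    from unique_decomposition[OF K V(2) this] a b e V(3) show "a = b" by auto
  qed
  have "card (Span K Us) = card ?L" using card_image[OF inj] img V(4) by simp
  also have "\<dots> = card K ^ n" using card_lists_length_eq[OF fK] by (simp add: conj_commute)
  finally show ?thesis using dim by simp
qed

lemma Span_snoc_in:
  assumes K: "subfield K R" and U: "set Us \<subseteq> carrier R" and a: "a \<in> Span K Us"
  shows "Span K (Us @ [a]) = Span K Us"
proof
  have ac: "a \<in> carrier R" using Span_in_carrier[OF _ U] a subfieldE(3)[OF K] by blast
  show "Span K (Us @ [a]) \<subseteq> Span K Us"
    by (rule mono_Span_subset[OF K _ U]) (use Span_base_incl[OF K U] a in auto)
  show "Span K Us \<subseteq> Span K (Us @ [a])"
    by (rule mono_Span_append[OF K U]) (use ac in auto)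
qed

lemma Span_snoc_notin:
  assumes K: "subfield K R" and U: "set Us \<subseteq> carrier R" and ac: "a \<in> carrier R"
    and a: "a \<notin> Span K Us"
  shows "dim K (Span K (Us @ [a])) = Suc (dim K (Span K Us))"
proof -
  obtain n where dn: "dimension n K (Span K Us)"
    using Span_finite_dimension[OF K U] by (auto simp: finite_dimension_def)
  have dim: "dim K (Span K Us) = n" using dimI[OF K dn] by (simp add: over_def)
  obtain Vs where V: "set Vs \<subseteq> carrier R" "independent K Vs" "length Vs = n" "Span K Vs = Span K Us"
    using exists_base[OF K dn] by blast
  have ind: "independent K (a # Vs)" using li_Cons[OF ac _ V(2)] a V(4) by simp
  have UA: "set (Us @ [a]) \<subseteq> carrier R" using U ac by auto
  have AV: "set (a # Vs) \<subseteq> carrier R" using V(1) ac by auto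
  have "Span K (a # Vs) = Span K (Us @ [a])"
  proof
    show "Span K (a # Vs) \<subseteq> Span K (Us @ [a])"
    proof (rule mono_Span_subset[OF K _ UA])
      have "set Vs \<subseteq> Span K Vs" using Span_base_incl[OF K V(1)] .
      also have "\<dots> \<subseteq> Span K (Us @ [a])" using V(4) mono_Span_append[OF K U, of "[a]"] ac by auto
      finally show "set (a # Vs) \<subseteq> Span K (Us @ [a])"
        using Span_base_incl[OF K UA] by auto
    qed
    show "Span K (Us @ [a]) \<subseteq> Span K (a # Vs)"
    proof (rule mono_Span_subset[OF K _ AV])
      have "set Us \<subseteq> Span K Us" using Span_base_incl[OF K U] .
      also have "\<dots> \<subseteq> Span K (a # Vs)" using V(4) mono_Span[OF K V(1) ac] by auto
      finally show "set (Us @ [a]) \<subseteq> Span K (a # Vs)"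
        using Span_base_incl[OF K AV] by auto
    qed
  qed
  then have "dimension (Suc n) K (Span K (Us @ [a]))"
    using dimension_independent[OF ind] V(3) by simp
  then show ?thesis using dimI[OF K] dim by (simp add: over_def)
qed

end

lemma A_Suc: "A_fun q a (Suc j) = A_fun q a j * (real q ^ a - real q ^ j)"
  by (simp add: A_fun_def)

lemma A_Suc_Suc: "A_fun q (Suc a) (Suc j) = (real q ^ Suc a - 1) * real q ^ j * A_fun q a j"
proof -
  have "A_fun q (Suc a) (Suc j) = (real q ^ Suc a - real q ^ 0) * (\<Prod>i<j. real q ^ Suc a - real q ^ Suc i)"
    unfolding A_fun_def by (rule prod.lessThan_Suc_shift)
  also have "(\<Prod>i<j. real q ^ Suc a - real q ^ Suc i) = (\<Prod>i<j. real q * (real q ^ a - real q ^ i))"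
    by (simp add: algebra_simps)
  also have "\<dots> = real q ^ j * A_fun q a j"
    by (simp add: prod.distrib A_fun_def)
  finally show ?thesis by simp
qed

lemma A_zero: "a < j \<Longrightarrow> A_fun q a j = 0"
  unfolding A_fun_def by (rule prod_zero) auto

lemma A_nonzero: assumes "q \<ge> 2" shows "A_fun q j j \<noteq> 0"
proof -
  have "\<forall>i\<in>{..<j}. real q ^ j - real q ^ i \<noteq> 0"
  proof
    fix i assume "i \<in> {..<j}"
    then have "real q ^ i < real q ^ j" using assms by (intro power_strict_increasing) auto
    then show "real q ^ j - real q ^ i \<noteq> 0" by simp
  qed
  then show ?thesis by (simp add: A_fun_def)
qed

lemma G_zero: "u < j \<Longrightarrow> gauss_binom q u j = 0"
  by (simp add: gauss_binom_def A_zero)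

lemma qPascal:
  assumes q: "q \<ge> 2"
  shows "real q ^ j * gauss_binom q (Suc u) (Suc j)
       = real q ^ j * gauss_binom q u (Suc j) + real q ^ u * gauss_binom q u j"
proof -
  have D0: "A_fun q j j \<noteq> 0" using A_nonzero[OF q] .
  have qj: "real q ^ Suc j - 1 \<noteq> 0"
  proof -
    have "(1::real) < real q ^ Suc j" using q by (intro one_less_power) auto
    then show ?thesis by simp
  qed
  have qp: "real q ^ j \<noteq> 0" using q by simp
  define D where "D = A_fun q (Suc j) (Suc j)"
  have D: "D = (real q ^ Suc j - 1) * real q ^ j * A_fun q j j" unfolding D_def by (rule A_Suc_Suc)
  have "real q ^ j * gauss_binom q (Suc u) (Suc j) = real q ^ j * ((real q ^ Suc u - 1) * real q ^ j * A_fun q u j) / D"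
    by (simp add: gauss_binom_def A_Suc_Suc D_def)
  also have "\<dots> = (real q ^ j * (A_fun q u j * (real q ^ u - real q ^ j)) + real q ^ u * (A_fun q u j * ((real q ^ Suc j - 1) * real q ^ j))) / D"
    by (simp add: algebra_simps power_add)
  also have "\<dots> = real q ^ j * (A_fun q u (Suc j) / D) + real q ^ u * (A_fun q u j / A_fun q j j)"
    using D0 qj qp by (simp add: D A_Suc field_simps)
  also have "\<dots> = real q ^ j * gauss_binom q u (Suc j) + real q ^ u * gauss_binom q u j"
    by (simp add: gauss_binom_def D_def)
  finally show ?thesis .
qed

definition T_fun :: "nat \<Rightarrow> nat \<Rightarrow> nat \<Rightarrow> nat \<Rightarrow> nat \<Rightarrow> real" where
  "T_fun q m u w s = (if s < w then 0 else gauss_binom q u (s - w) * A_fun q (m - w) (s - w) * real q ^ (w * u))"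

lemma T_zero: "T_fun q m 0 w s = (if s = w then 1 else 0)"
proof (cases "s = w")
  case True thus ?thesis by (simp add: T_fun_def gauss_binom_def A_fun_def)
next
  case False thus ?thesis by (simp add: T_fun_def G_zero)
qed

lemma T_rec:
  assumes q: "q \<ge> 2" and wm: "w \<le> m"
  shows "T_fun q m (Suc u) w s = real q ^ w * T_fun q m u w s + (real q ^ m - real q ^ w) * T_fun q m u (Suc w) s"
proof (cases "s < w")
  case True then show ?thesis by (simp add: T_fun_def)
next
  case False
  show ?thesis
  proof (cases "s = w")
    case True
    have "T_fun q m (Suc u) w s = real q ^ (w * Suc u)" using True by (simp add: T_fun_def gauss_binom_def A_fun_def)
    moreover have "T_fun q m u w s = real q ^ (w * u)" using True by (simp add: T_fun_def gauss_binom_def A_fun_def)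
    moreover have "T_fun q m u (Suc w) s = 0" using True by (simp add: T_fun_def)
    moreover have "real q ^ (w * Suc u) = real q ^ w * real q ^ (w * u)" by (simp add: power_add mult_Suc_right)
    ultimately show ?thesis by simp
  next
    case False
    define j where "j = s - w - 1"
    have s: "s = w + Suc j" using False \<open>\<not> s < w\<close> unfolding j_def by simp
    show ?thesis
    proof (cases "m = w")
      case True then show ?thesis by (simp add: T_fun_def s A_zero)
    next
      case False
      define n where "n = m - w - 1"
      have m: "m = w + Suc n" using False wm unfolding n_def by simp
      have mw: "m - w = Suc n" "m - Suc w = n" using m by auto
      have sw: "s - w = Suc j" "s - Suc w = j" "\<not> s < Suc w" "\<not> s < w" using s by auto
      define X where "X = (real q ^ Suc n - 1) * A_fun q n j"
      define P where "P = real q ^ (w * u)"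
      define Q where "Q = real q ^ w"
      have pw1: "real q ^ (w * Suc u) = P * Q" by (simp add: P_def Q_def power_add mult_Suc_right)
      have pw2: "real q ^ (Suc w * u) = P * real q ^ u" by (simp add: P_def power_add)
      have pw3: "real q ^ m - real q ^ w = Q * (real q ^ Suc n - 1)"
        by (simp add: Q_def m power_add right_diff_distrib)
      have lhs: "T_fun q m (Suc u) w s = gauss_binom q (Suc u) (Suc j) * A_fun q (Suc n) (Suc j) * (P * Q)"
        unfolding T_fun_def using sw mw pw1 by simp
      have r1: "T_fun q m u w s = gauss_binom q u (Suc j) * A_fun q (Suc n) (Suc j) * P"
        unfolding T_fun_def P_def using sw mw by simp
      have r2: "T_fun q m u (Suc w) s = gauss_binom q u j * A_fun q n j * (P * real q ^ u)"
        unfolding T_fun_def using sw mw pw2 by simp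
      have AS: "A_fun q (Suc n) (Suc j) = real q ^ j * X" unfolding X_def by (simp add: A_Suc_Suc)
      have QP: "real q ^ j * gauss_binom q (Suc u) (Suc j)
       = real q ^ j * gauss_binom q u (Suc j) + real q ^ u * gauss_binom q u j" by (rule qPascal[OF q])
      have calc: "gauss_binom q (Suc u) (Suc j) * (real q ^ j * X) * (P * Q) =
          Q * (gauss_binom q u (Suc j) * (real q ^ j * X) * P) +
          Q * (real q ^ Suc n - 1) * (gauss_binom q u j * A_fun q n j * (P * real q ^ u))"
      proof -
        have "gauss_binom q (Suc u) (Suc j) * (real q ^ j * X) * (P * Q)
          = (real q ^ j * gauss_binom q (Suc u) (Suc j)) * (X * P * Q)" by (simp only: ac_simps)
        also have "\<dots> = (real q ^ j * gauss_binom q u (Suc j) + real q ^ u * gauss_binom q u j) * (X * P * Q)"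
          by (simp only: QP)
        also have "\<dots> = Q * (gauss_binom q u (Suc j) * (real q ^ j * X) * P) +
            Q * (real q ^ Suc n - 1) * (gauss_binom q u j * A_fun q n j * (P * real q ^ u))"
          unfolding X_def by (simp only: algebra_simps)
        finally show "gauss_binom q (Suc u) (Suc j) * (real q ^ j * X) * (P * Q) =
          Q * (gauss_binom q u (Suc j) * (real q ^ j * X) * P) +
          Q * (real q ^ Suc n - 1) * (gauss_binom q u j * A_fun q n j * (P * real q ^ u))" .
      qed
      show ?thesis unfolding lhs r1 r2 pw3 AS using calc unfolding Q_def by simp
    qed
  qed
qed


context ring begin

lemma count_main:
  assumes K: "subfield K R" and fin: "finite (carrier R)" and cK: "card K = q"
    and cR: "card (carrier R) = q ^ m" and q: "q \<ge> 2"
  shows "set y \<subseteq> carrier R \<Longrightarrow> real (card {z. length z = u \<and> set z \<subseteq> carrier R \<and> dim K (Span K (y @ z)) = s})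
     = T_fun q m u (dim K (Span K y)) s"
proof (induction u arbitrary: y)
  case 0
  have "{z. length z = 0 \<and> set z \<subseteq> carrier R \<and> dim K (Span K (y @ z)) = s}
      = (if dim K (Span K y) = s then {[]} else {})" by auto
  then show ?case by (simp add: T_zero)
next
  case (Suc u)
  let ?V = "carrier R"
  define S where "S y' = {z. length z = u \<and> set z \<subseteq> ?V \<and> dim K (Span K (y' @ z)) = s}" for y'
  have eq: "{z. length z = Suc u \<and> set z \<subseteq> ?V \<and> dim K (Span K (y @ z)) = s}
      = (\<Union>a\<in>?V. (#) a ` S (y @ [a]))"
  proof
    show "{z. length z = Suc u \<and> set z \<subseteq> ?V \<and> dim K (Span K (y @ z)) = s} \<subseteq> (\<Union>a\<in>?V. (#) a ` S (y @ [a]))"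
    proof
      fix z assume "z \<in> {z. length z = Suc u \<and> set z \<subseteq> ?V \<and> dim K (Span K (y @ z)) = s}"
      then obtain a z' where z: "z = a # z'" "length z' = u" "a \<in> ?V" "set z' \<subseteq> ?V"
          "dim K (Span K (y @ a # z')) = s"
        by (auto simp: length_Suc_conv)
      then have "z' \<in> S (y @ [a])" by (simp add: S_def)
      then show "z \<in> (\<Union>a\<in>?V. (#) a ` S (y @ [a]))" using z by blast
    qed
    show "(\<Union>a\<in>?V. (#) a ` S (y @ [a])) \<subseteq> {z. length z = Suc u \<and> set z \<subseteq> ?V \<and> dim K (Span K (y @ z)) = s}"
      by (auto simp: S_def)
  qed
  have finS: "finite (S y')" for y'
  proof (rule finite_subset)
    show "S y' \<subseteq> {z. set z \<subseteq> ?V \<and> length z = u}" by (auto simp: S_def)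
    show "finite {z. set z \<subseteq> ?V \<and> length z = u}" by (rule finite_lists_length_eq[OF fin])
  qed
  have "card (\<Union>a\<in>?V. (#) a ` S (y @ [a])) = (\<Sum>a\<in>?V. card ((#) a ` S (y @ [a])))"
    by (rule card_UN_disjoint) (use fin finS in auto)
  also have "\<dots> = (\<Sum>a\<in>?V. card (S (y @ [a])))"
    by (rule sum.cong) (auto intro: card_image simp: inj_on_def)
  finally have c1: "real (card {z. length z = Suc u \<and> set z \<subseteq> ?V \<and> dim K (Span K (y @ z)) = s})
      = (\<Sum>a\<in>?V. real (card (S (y @ [a]))))" using eq by simp
  have IH: "real (card (S (y @ [a]))) = T_fun q m u (dim K (Span K (y @ [a]))) s" if "a \<in> ?V" for a
    unfolding S_def using Suc.IH[of "y @ [a]"] Suc.prems that by simp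
  define W where "W = Span K y"
  define w where "w = dim K W"
  have KV: "K \<subseteq> ?V" using subfieldE(3)[OF K] .
  have WV: "W \<subseteq> ?V" unfolding W_def by (rule Span_in_carrier[OF KV Suc.prems])
  have finK: "finite K" using finite_subset[OF KV fin] .
  have cW: "card W = q ^ w" unfolding W_def w_def using card_Span[OF K finK Suc.prems] cK by simp
  have cVW: "card (?V - W) = q ^ m - q ^ w" using card_Diff_subset[OF finite_subset[OF WV fin] WV] cW cR by simp
  have le: "q ^ w \<le> q ^ m" using card_mono[OF fin WV] cW cR by simp
  have wm: "w \<le> m" using power_le_imp_le_exp[of q w m] le q by simp
  have in_W: "dim K (Span K (y @ [a])) = w" if "a \<in> W" for a
    using Span_snoc_in[OF K Suc.prems] that unfolding W_def w_def by simp
  have out_W: "dim K (Span K (y @ [a])) = Suc w" if "a \<in> ?V - W" for a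
    using Span_snoc_notin[OF K Suc.prems] that unfolding W_def w_def by simp
  have "(\<Sum>a\<in>?V. real (card (S (y @ [a])))) = (\<Sum>a\<in>?V - W. real (card (S (y @ [a])))) + (\<Sum>a\<in>W. real (card (S (y @ [a]))))"
    by (rule sum.subset_diff[OF WV fin])
  also have "(\<Sum>a\<in>W. real (card (S (y @ [a])))) = (\<Sum>a\<in>W. T_fun q m u w s)"
    by (rule sum.cong) (use IH in_W WV in auto)
  also have "(\<Sum>a\<in>?V - W. real (card (S (y @ [a])))) = (\<Sum>a\<in>?V - W. T_fun q m u (Suc w) s)"
    by (rule sum.cong) (use IH out_W in auto)
  finally have c2: "(\<Sum>a\<in>?V. real (card (S (y @ [a])))) =
      real (q ^ m - q ^ w) * T_fun q m u (Suc w) s + real (q ^ w) * T_fun q m u w s"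
    using cW cVW by simp
  have "real (q ^ m - q ^ w) = real q ^ m - real q ^ w" using le by (simp add: of_nat_diff)
  then show ?case using c1 c2 T_rec[OF q wm, of u s] unfolding W_def[symmetric] w_def[symmetric]
    by simp
qed

end

theorem lemma8:
  fixes R :: "'a ring" and K :: "'a set" and q m u v w s :: nat and y :: "'a list"
  assumes "\<exists>p k. prime p \<and> k > 0 \<and> q = p ^ k"
    and "field R" and "finite (carrier R)" and "card (carrier R) = q ^ m"
    and "subfield K R" and "card K = q"
    and "m > 0" and "u > 0" and "v > 0"
    and "length y = v" and "set y \<subseteq> carrier R"
    and "rank_over R K y = w"
    and "s \<ge> w"
  shows "real (card {z. length z = u \<and> set z \<subseteq> carrier R \<and> rank_over R K (y @ z) = s})
           = gauss_binom q u (s - w) * A_fun q (m - w) (s - w) * real q ^ (w * u)"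
proof -
  interpret field R by fact
  obtain p k where pk: "prime p" "k > 0" "q = p ^ k" using assms(1) by blast
  have "p \<ge> 2" using prime_ge_2_nat[OF pk(1)] .
  moreover have "p \<le> p ^ k" using pk(2) \<open>p \<ge> 2\<close> by (simp add: self_le_power)
  ultimately have q: "q \<ge> 2" using pk(3) by simp
  have "real (card {z. length z = u \<and> set z \<subseteq> carrier R \<and> dim K (Span K (y @ z)) = s})
     = T_fun q m u (dim K (Span K y)) s"
    by (rule count_main[OF assms(5) assms(3) assms(6) assms(4) q assms(11)])
  then show ?thesis using assms(12,13) unfolding rank_over_def T_fun_def by simp
qed

end
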